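(* Let $X$ be a B-convex Köthe function space over a $\sigma$-finite measure space $S$, and let $\Omega: X\to L_0(S)$ be a homogeneous quasi-linear map, i.e. $\Omega(\lambda f)=\lambda\Omega(f)$ and there is $C$ with $\Omega(f+f')-\Omega(f)-\Omega(f')\in X$ and $\|\Omega(f+f')-\Omega(f)-\Omega(f')\|_X\le C(\|f\|_X+\|f'\|_X)$ for all $f,f'\in X$. Let $\mathcal U$ be the group of units. Then the following are equivalent: (a) $\Omega$ is a $\mathcal U$-centralizer; (b) $\Omega$ is an $L_\infty$-centralizer.
   Context: The group of units $\mathcal U$ is the group of measurable functions $a$ on $S$ with $|a|=1$ a.e., acting on $X$ and on $L_0(S)$ by multiplication $f\mapsto af$. $\Omega$ is a $\mathcal U$-centralizer if there is $C$ such that $\Omega(af)-a\Omega(f)\in X$ and $\|\Omega(af)-a\Omega(f)\|_X\le C\|f\|_X$ for all $a\in\mathcal U$, $f\in X$. $\Omega$ is an $L_\infty$-centralizer if there is $C$ such that $\|\Omega(af)-a\Omega(f)\|_X\le C\|a\|_\infty\|f\|_X$ for all $a\in L_\infty(S)$, $f\in X$. *)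

theory Defs
  imports "HOL-Analysis.Analysis" "HOL-Probability.Essential_Supremum"
begin

text \<open>Elements of L0(S) are represented by (complex-valued) measurable functions on the
measure space M; equalities in L0 are read almost everywhere.\<close>

definition koethe_space ::
  "'a measure \<Rightarrow> ('a \<Rightarrow> complex) set \<Rightarrow> (('a \<Rightarrow> complex) \<Rightarrow> real) \<Rightarrow> bool" where
  "koethe_space M X N \<longleftrightarrow>
     X \<subseteq> borel_measurable M \<and>
     \<comment> \<open>vector space under pointwise operations\<close>
     (\<forall>f\<in>X. \<forall>g\<in>X. (\<lambda>x. f x + g x) \<in> X) \<and>
     (\<forall>c. \<forall>f\<in>X. (\<lambda>x. c * f x) \<in> X) \<and>
     \<comment> \<open>norm (zero exactly on the a.e.-zero functions)\<close>
     (\<forall>f\<in>X. 0 \<le> N f) \<and>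
     (\<forall>f\<in>X. N f = 0 \<longleftrightarrow> (AE x in M. f x = 0)) \<and>
     (\<forall>c. \<forall>f\<in>X. N (\<lambda>x. c * f x) = norm c * N f) \<and>
     (\<forall>f\<in>X. \<forall>g\<in>X. N (\<lambda>x. f x + g x) \<le> N f + N g) \<and>
     \<comment> \<open>ideal (lattice) property\<close>
     (\<forall>f\<in>X. \<forall>g\<in>borel_measurable M.
        (AE x in M. norm (g x) \<le> norm (f x)) \<longrightarrow> g \<in> X \<and> N g \<le> N f) \<and>
     \<comment> \<open>completeness\<close>
     (\<forall>u. (\<forall>n. u n \<in> X) \<longrightarrow>
        (\<forall>e>0. \<exists>K. \<forall>m\<ge>K. \<forall>n\<ge>K. N (\<lambda>x. u m x - u n x) < e) \<longrightarrow>
        (\<exists>g\<in>X. (\<lambda>n. N (\<lambda>x. u n x - g x)) \<longlonglongrightarrow> 0)) \<and>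
     \<comment> \<open>indicators of sets of finite measure belong to X\<close>
     (\<forall>A\<in>sets M. emeasure M A < \<infinity> \<longrightarrow> (\<lambda>x. complex_of_real (indicator A x)) \<in> X) \<and>
     \<comment> \<open>elements of X are integrable over sets of finite measure\<close>
     (\<forall>f\<in>X. \<forall>A\<in>sets M. emeasure M A < \<infinity> \<longrightarrow>
        (\<integral>\<^sup>+ x\<in>A. ennreal (norm (f x)) \<partial>M) < \<infinity>)"

definition B_convex :: "('a \<Rightarrow> complex) set \<Rightarrow> (('a \<Rightarrow> complex) \<Rightarrow> real) \<Rightarrow> bool" where
  "B_convex X N \<longleftrightarrow>
     (\<exists>n::nat. n \<ge> 1 \<and> (\<exists>\<epsilon>::real. \<epsilon> > 0 \<and>
       (\<forall>v :: nat \<Rightarrow> 'a \<Rightarrow> complex. (\<forall>i<n. v i \<in> X \<and> N (v i) \<le> 1) \<longrightarrow>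
          (\<exists>s :: nat \<Rightarrow> real. (\<forall>i<n. s i = 1 \<or> s i = -1) \<and>
             N (\<lambda>x. \<Sum>i<n. complex_of_real (s i) * v i x) \<le> real n * (1 - \<epsilon>)))))"

text \<open>Homogeneous quasi-linear map \<Omega> : X \<rightarrow> L0(S).  Since \<Omega> is a map on equivalence
classes, we require that it respects a.e. equality.\<close>
definition hom_quasi_linear ::
  "'a measure \<Rightarrow> ('a \<Rightarrow> complex) set \<Rightarrow> (('a \<Rightarrow> complex) \<Rightarrow> real)
     \<Rightarrow> (('a \<Rightarrow> complex) \<Rightarrow> ('a \<Rightarrow> complex)) \<Rightarrow> bool" where
  "hom_quasi_linear M X N \<Omega> \<longleftrightarrow>
     (\<forall>f\<in>X. \<Omega> f \<in> borel_measurable M) \<and>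
     (\<forall>f\<in>X. \<forall>g\<in>X. (AE x in M. f x = g x) \<longrightarrow> (AE x in M. \<Omega> f x = \<Omega> g x)) \<and>
     (\<forall>c. \<forall>f\<in>X. AE x in M. \<Omega> (\<lambda>t. c * f t) x = c * \<Omega> f x) \<and>
     (\<exists>C. \<forall>f\<in>X. \<forall>g\<in>X.
        (\<lambda>x. \<Omega> (\<lambda>t. f t + g t) x - \<Omega> f x - \<Omega> g x) \<in> X \<and>
        N (\<lambda>x. \<Omega> (\<lambda>t. f t + g t) x - \<Omega> f x - \<Omega> g x) \<le> C * (N f + N g))"

definition units_group :: "'a measure \<Rightarrow> ('a \<Rightarrow> complex) set" where
  "units_group M = {a \<in> borel_measurable M. AE x in M. norm (a x) = 1}"

definition Linf :: "'a measure \<Rightarrow> ('a \<Rightarrow> complex) set" where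
  "Linf M = {a \<in> borel_measurable M. \<exists>B. AE x in M. norm (a x) \<le> B}"

definition Linf_norm :: "'a measure \<Rightarrow> ('a \<Rightarrow> complex) \<Rightarrow> real" where
  "Linf_norm M a = real_of_ereal (esssup M (\<lambda>x. ereal (norm (a x))))"

definition U_centralizer ::
  "'a measure \<Rightarrow> ('a \<Rightarrow> complex) set \<Rightarrow> (('a \<Rightarrow> complex) \<Rightarrow> real)
     \<Rightarrow> (('a \<Rightarrow> complex) \<Rightarrow> ('a \<Rightarrow> complex)) \<Rightarrow> bool" where
  "U_centralizer M X N \<Omega> \<longleftrightarrow>
     (\<exists>C. \<forall>a\<in>units_group M. \<forall>f\<in>X.
        (\<lambda>x. \<Omega> (\<lambda>t. a t * f t) x - a x * \<Omega> f x) \<in> X \<and>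
        N (\<lambda>x. \<Omega> (\<lambda>t. a t * f t) x - a x * \<Omega> f x) \<le> C * N f)"

definition Linf_centralizer ::
  "'a measure \<Rightarrow> ('a \<Rightarrow> complex) set \<Rightarrow> (('a \<Rightarrow> complex) \<Rightarrow> real)
     \<Rightarrow> (('a \<Rightarrow> complex) \<Rightarrow> ('a \<Rightarrow> complex)) \<Rightarrow> bool" where
  "Linf_centralizer M X N \<Omega> \<longleftrightarrow>
     (\<exists>C. \<forall>a\<in>Linf M. \<forall>f\<in>X.
        (\<lambda>x. \<Omega> (\<lambda>t. a t * f t) x - a x * \<Omega> f x) \<in> X \<and>
        N (\<lambda>x. \<Omega> (\<lambda>t. a t * f t) x - a x * \<Omega> f x) \<le> C * Linf_norm M a * N f)"

end

theory Submission imports Defs begin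

lemma Linf_nonneg:
  assumes a: "a \<in> borel_measurable M"
  shows "0 \<le> Linf_norm M a"
proof (cases "emeasure M (space M) = 0")
  case True
  have "esssup M (\<lambda>x. ereal (norm (a x))) = - \<infinity>"
    by (rule esssup_zero_space[OF True]) (use a in measurable)
  then show ?thesis by (simp add: Linf_norm_def)
next
  case False
  have "esssup M (\<lambda>x. 0::ereal) \<le> esssup M (\<lambda>x. ereal (norm (a x)))"
    by (rule esssup_mono) auto
  then have "0 \<le> esssup M (\<lambda>x. ereal (norm (a x)))" using esssup_const[OF False, of "0::ereal"] by simp
  then show ?thesis by (simp add: Linf_norm_def real_of_ereal_pos)
qed

lemma Linf_AE:
  assumes a: "a \<in> Linf M"
  shows "AE x in M. norm (a x) \<le> Linf_norm M a"
proof -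
  from a obtain B where m: "a \<in> borel_measurable M" and B: "AE x in M. norm (a x) \<le> B"
    by (auto simp: Linf_def)
  let ?e = "esssup M (\<lambda>x. ereal (norm (a x)))"
  have le: "?e \<le> ereal B"
    by (rule esssup_I) (use m B in auto)
  have ae: "AE x in M. ereal (norm (a x)) \<le> ?e" by (rule esssup_AE)
  show ?thesis
  proof (cases "?e = -\<infinity>")
    case True
    with ae have "AE x in M. False" by simp
    then show ?thesis by (rule AE_mp) simp
  next
    case False
    with le obtain r where r: "?e = ereal r" by (cases ?e) auto
    with ae show ?thesis by (simp add: Linf_norm_def)
  qed
qed

lemma Linf_unit_le:
  assumes a: "a \<in> units_group M"
  shows "Linf_norm M a \<le> 1"
proof -
  from a have m: "a \<in> borel_measurable M" and B: "AE x in M. norm (a x) = 1"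
    by (auto simp: units_group_def)
  let ?e = "esssup M (\<lambda>x. ereal (norm (a x)))"
  have le: "?e \<le> ereal 1"
    by (rule esssup_I) (use m B in auto)
  then show ?thesis unfolding Linf_norm_def
    by (cases ?e) auto
qed

lemma units_decomp:
  fixes b :: "'a \<Rightarrow> complex"
  assumes b: "b \<in> borel_measurable M" and le: "\<And>x. norm (b x) \<le> 1"
  shows "\<exists>u\<in>units_group M. \<exists>v\<in>units_group M. \<forall>x. u x + v x = 2 * b x"
proof -
  define s where "s x = sqrt (1 - (norm (b x))^2)" for x
  define u where "u x = (if b x = 0 then 1 else sgn (b x) * (complex_of_real (norm (b x)) + \<i> * complex_of_real (s x)))" for x
  define v where "v x = (if b x = 0 then -1 else sgn (b x) * (complex_of_real (norm (b x)) - \<i> * complex_of_real (s x)))" for x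
  have sm: "s \<in> borel_measurable M" unfolding s_def[abs_def] using b by measurable
  have um: "u \<in> borel_measurable M" unfolding u_def[abs_def] using b sm by measurable
  have vm: "v \<in> borel_measurable M" unfolding v_def[abs_def] using b sm by measurable
  have s2: "(s x)^2 = 1 - (norm (b x))^2" for x
    unfolding s_def using le[of x] by (simp add: power_le_one)
  have n1: "norm (complex_of_real r + \<i> * complex_of_real t) = 1"
       "norm (complex_of_real r - \<i> * complex_of_real t) = 1" if "r^2 + t^2 = 1" for r t
    using that by (simp_all add: cmod_def)
  have nu: "norm (u x) = 1" for x
    using n1(1)[of "norm (b x)" "s x"] s2[of x] by (auto simp: u_def norm_mult norm_sgn)
  have nv: "norm (v x) = 1" for x
    using n1(2)[of "norm (b x)" "s x"] s2[of x] by (auto simp: v_def norm_mult norm_sgn)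
  have sum: "u x + v x = 2 * b x" for x
  proof (cases "b x = 0")
    case False
    then show ?thesis unfolding u_def v_def
      by (simp add: sgn_div_norm algebra_simps scaleR_conv_of_real)
  qed (simp add: u_def v_def)
  show ?thesis
    apply (rule bexI[of _ u], rule bexI[of _ v])
    using um vm nu nv sum by (auto simp: units_group_def)
qed

lemma kmeas: "koethe_space M X N \<Longrightarrow> f \<in> X \<Longrightarrow> f \<in> borel_measurable M"
proof -
  assume K: "koethe_space M X N" and f: "f \<in> X"
  have "X \<subseteq> borel_measurable M" using K unfolding koethe_space_def by (elim conjE) assumption
  with f show ?thesis by (rule subsetD[rotated])
qed
lemma knn: "koethe_space M X N \<Longrightarrow> f \<in> X \<Longrightarrow> 0 \<le> N f"
proof -
  assume K: "koethe_space M X N" and f: "f \<in> X"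
  have "\<forall>f\<in>X. 0 \<le> N f" using K unfolding koethe_space_def by (elim conjE) assumption
  with f show ?thesis by (rule bspec[rotated])
qed
lemma kadd: "koethe_space M X N \<Longrightarrow> f \<in> X \<Longrightarrow> g \<in> X \<Longrightarrow>
   (\<lambda>x. f x + g x) \<in> X \<and> N (\<lambda>x. f x + g x) \<le> N f + N g"
proof -
  assume K: "koethe_space M X N" and f: "f \<in> X" and g: "g \<in> X"
  have 1: "\<forall>f\<in>X. \<forall>g\<in>X. (\<lambda>x. f x + g x) \<in> X" using K unfolding koethe_space_def by (elim conjE) assumption
  have 2: "\<forall>f\<in>X. \<forall>g\<in>X. N (\<lambda>x. f x + g x) \<le> N f + N g" using K unfolding koethe_space_def by (elim conjE) assumption
  show ?thesis using 1[rule_format, OF f g] 2[rule_format, OF f g] by (rule conjI)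
qed
lemma kscal: "koethe_space M X N \<Longrightarrow> f \<in> X \<Longrightarrow>
   (\<lambda>x. c * f x) \<in> X \<and> N (\<lambda>x. c * f x) = norm c * N f"
proof -
  assume K: "koethe_space M X N" and f: "f \<in> X"
  have 1: "\<forall>c. \<forall>f\<in>X. (\<lambda>x. c * f x) \<in> X" using K unfolding koethe_space_def by (elim conjE) assumption
  have 2: "\<forall>c. \<forall>f\<in>X. N (\<lambda>x. c * f x) = norm c * N f" using K unfolding koethe_space_def by (elim conjE) assumption
  show ?thesis using 1[rule_format, OF f] 2[rule_format, OF f] by (rule conjI)
qed
lemma kideal: "koethe_space M X N \<Longrightarrow> f \<in> X \<Longrightarrow> g \<in> borel_measurable M \<Longrightarrow>
   (AE x in M. norm (g x) \<le> norm (f x)) \<Longrightarrow> g \<in> X \<and> N g \<le> N f"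
proof -
  assume K: "koethe_space M X N" and f: "f \<in> X" and g: "g \<in> borel_measurable M" and ae: "AE x in M. norm (g x) \<le> norm (f x)"
  have 1: "\<forall>f\<in>X. \<forall>g\<in>borel_measurable M.
        (AE x in M. norm (g x) \<le> norm (f x)) \<longrightarrow> g \<in> X \<and> N g \<le> N f" using K unfolding koethe_space_def by (elim conjE) assumption
  show ?thesis using 1[rule_format, OF f g ae] .
qed
lemma kaeeq: assumes K: "koethe_space M X N" and f: "f \<in> X" and g: "g \<in> borel_measurable M"
  and ae: "AE x in M. g x = f x" shows "g \<in> X \<and> N g = N f"
proof -
  have 1: "g \<in> X \<and> N g \<le> N f" proof (rule kideal[OF K f g])
    show "AE x in M. norm (g x) \<le> norm (f x)" using ae by eventually_elim simp
  qed
  have 2: "N f \<le> N g" proof (rule kideal[OF K 1[THEN conjunct1] kmeas[OF K f], THEN conjunct2])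
    show "AE x in M. norm (f x) \<le> norm (g x)" using ae by eventually_elim simp
  qed
  show ?thesis using 1 2 by auto
qed
lemma kzero: assumes K: "koethe_space M X N" shows "(\<lambda>x. 0) \<in> X \<and> N (\<lambda>x. 0) = 0"
proof -
  have 1: "\<forall>A\<in>sets M. emeasure M A < \<infinity> \<longrightarrow> (\<lambda>x. complex_of_real (indicator A x)) \<in> X"
    using K unfolding koethe_space_def by (elim conjE) assumption
  have "(\<lambda>x. complex_of_real (indicator {} x)) \<in> X" using 1[rule_format, of "{}"] by simp
  then have z: "(\<lambda>x. 0::complex) \<in> X" by simp
  have 2: "\<forall>f\<in>X. N f = 0 \<longleftrightarrow> (AE x in M. f x = 0)"
    using K unfolding koethe_space_def by (elim conjE) assumption
  have "N (\<lambda>x. 0) = 0" using 2[rule_format, OF z] by simp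
  with z show ?thesis by simp
qed

lemma core:
  assumes K: "koethe_space M X N" and Q: "hom_quasi_linear M X N \<Omega>"
    and C1: "\<forall>f\<in>X. \<forall>g\<in>X.
        (\<lambda>x. \<Omega> (\<lambda>t. f t + g t) x - \<Omega> f x - \<Omega> g x) \<in> X \<and>
        N (\<lambda>x. \<Omega> (\<lambda>t. f t + g t) x - \<Omega> f x - \<Omega> g x) \<le> C1 * (N f + N g)"
    and C0: "\<forall>a\<in>units_group M. \<forall>f\<in>X.
        (\<lambda>x. \<Omega> (\<lambda>t. a t * f t) x - a x * \<Omega> f x) \<in> X \<and>
        N (\<lambda>x. \<Omega> (\<lambda>t. a t * f t) x - a x * \<Omega> f x) \<le> C0 * N f"
    and b: "b \<in> borel_measurable M" and le: "\<And>x. norm (b x) \<le> 1" and f: "f \<in> X"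
  shows "(\<lambda>x. \<Omega> (\<lambda>t. b t * f t) x - b x * \<Omega> f x) \<in> X \<and>
        N (\<lambda>x. \<Omega> (\<lambda>t. b t * f t) x - b x * \<Omega> f x) \<le> (\<bar>C0\<bar> + \<bar>C1\<bar>) * N f"
proof -
  obtain u v where u: "u \<in> units_group M" and v: "v \<in> units_group M" and uv: "\<And>x. u x + v x = 2 * b x"
    using units_decomp[OF b le] by blast
  have fm: "f \<in> borel_measurable M" using kmeas[OF K f] .
  have Qm: "\<And>g. g \<in> X \<Longrightarrow> \<Omega> g \<in> borel_measurable M"
    and Qae: "\<And>f g. f \<in> X \<Longrightarrow> g \<in> X \<Longrightarrow> (AE x in M. f x = g x) \<Longrightarrow> (AE x in M. \<Omega> f x = \<Omega> g x)"
    and Qh: "\<And>c f. f \<in> X \<Longrightarrow> AE x in M. \<Omega> (\<lambda>t. c * f t) x = c * \<Omega> f x"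
    using Q unfolding hom_quasi_linear_def by blast+
  have um: "u \<in> borel_measurable M" and uae: "AE x in M. norm (u x) = 1" using u by (auto simp: units_group_def)
  have vm: "v \<in> borel_measurable M" and vae: "AE x in M. norm (v x) = 1" using v by (auto simp: units_group_def)
  have uf: "(\<lambda>t. u t * f t) \<in> X \<and> N (\<lambda>t. u t * f t) \<le> N f"
  proof (rule kideal[OF K f])
    show "(\<lambda>t. u t * f t) \<in> borel_measurable M" using um fm by measurable
    show "AE x in M. norm (u x * f x) \<le> norm (f x)" using uae by eventually_elim (simp add: norm_mult)
  qed
  have vf: "(\<lambda>t. v t * f t) \<in> X \<and> N (\<lambda>t. v t * f t) \<le> N f"
  proof (rule kideal[OF K f])
    show "(\<lambda>t. v t * f t) \<in> borel_measurable M" using vm fm by measurable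
    show "AE x in M. norm (v x * f x) \<le> norm (f x)" using vae by eventually_elim (simp add: norm_mult)
  qed
  define g where "g = (\<lambda>t. u t * f t + v t * f t)"
  have gX: "g \<in> X" unfolding g_def using kadd[OF K uf[THEN conjunct1] vf[THEN conjunct1]] by blast
  have bfg: "(\<lambda>t. b t * f t) = (\<lambda>t. (1/2) * g t)"
    unfolding g_def by (rule ext) (simp add: distrib_right[symmetric] uv)
  define q where "q = (\<lambda>x. \<Omega> g x - \<Omega> (\<lambda>t. u t * f t) x - \<Omega> (\<lambda>t. v t * f t) x)"
  have q: "q \<in> X \<and> N q \<le> C1 * (N (\<lambda>t. u t * f t) + N (\<lambda>t. v t * f t))"
    using C1[rule_format, OF uf[THEN conjunct1] vf[THEN conjunct1]] unfolding q_def g_def by simp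
  define du where "du = (\<lambda>x. \<Omega> (\<lambda>t. u t * f t) x - u x * \<Omega> f x)"
  define dv where "dv = (\<lambda>x. \<Omega> (\<lambda>t. v t * f t) x - v x * \<Omega> f x)"
  have du: "du \<in> X \<and> N du \<le> C0 * N f" using C0[rule_format, OF u f] unfolding du_def by simp
  have dv: "dv \<in> X \<and> N dv \<le> C0 * N f" using C0[rule_format, OF v f] unfolding dv_def by simp
  have hq: "(\<lambda>x. (1/2) * q x) \<in> X \<and> N (\<lambda>x. (1/2) * q x) = 1/2 * N q"
    using kscal[OF K q[THEN conjunct1], of "1/2"] by simp
  have hu: "(\<lambda>x. (1/2) * du x) \<in> X \<and> N (\<lambda>x. (1/2) * du x) = 1/2 * N du"
    using kscal[OF K du[THEN conjunct1], of "1/2"] by simp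
  have hv: "(\<lambda>x. (1/2) * dv x) \<in> X \<and> N (\<lambda>x. (1/2) * dv x) = 1/2 * N dv"
    using kscal[OF K dv[THEN conjunct1], of "1/2"] by simp
  have s1: "(\<lambda>x. (1/2) * q x + (1/2) * du x) \<in> X \<and> N (\<lambda>x. (1/2) * q x + (1/2) * du x) \<le> 1/2 * N q + 1/2 * N du"
    using kadd[OF K hq[THEN conjunct1] hu[THEN conjunct1]] hq hu by simp
  define r where "r = (\<lambda>x. ((1/2) * q x + (1/2) * du x) + (1/2) * dv x)"
  have s2: "r \<in> X \<and> N r \<le> 1/2 * N q + 1/2 * N du + 1/2 * N dv"
    using kadd[OF K s1[THEN conjunct1] hv[THEN conjunct1]] s1 hv unfolding r_def by simp
  have Nuf: "0 \<le> N (\<lambda>t. u t * f t)" "0 \<le> N (\<lambda>t. v t * f t)" "0 \<le> N f"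
    using knn[OF K] uf vf f by auto
  have "C1 * (N (\<lambda>t. u t * f t) + N (\<lambda>t. v t * f t)) \<le> \<bar>C1\<bar> * (N (\<lambda>t. u t * f t) + N (\<lambda>t. v t * f t))"
    using Nuf by (intro mult_right_mono) auto
  also have "\<dots> \<le> \<bar>C1\<bar> * (2 * N f)" using uf vf by (intro mult_left_mono) auto
  finally have nq: "N q \<le> \<bar>C1\<bar> * (2 * N f)" using q by linarith
  have "C0 * N f \<le> \<bar>C0\<bar> * N f" using Nuf by (intro mult_right_mono) auto
  then have ndu: "N du \<le> \<bar>C0\<bar> * N f" and ndv: "N dv \<le> \<bar>C0\<bar> * N f" using du dv by linarith+
  have Nr: "N r \<le> (\<bar>C0\<bar> + \<bar>C1\<bar>) * N f"
    using s2 nq ndu ndv by (simp add: algebra_simps)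
  define D where "D = (\<lambda>x. \<Omega> (\<lambda>t. b t * f t) x - b x * \<Omega> f x)"
  have bfX: "(\<lambda>t. b t * f t) \<in> X" unfolding bfg using kscal[OF K gX] by blast
  have Dm: "D \<in> borel_measurable M" unfolding D_def using Qm[OF bfX] Qm[OF f] b by measurable
  have "AE x in M. D x = r x"
    using Qh[OF gX, of "1/2"]
  proof eventually_elim
    case (elim x)
    have "D x = (1/2) * \<Omega> g x - b x * \<Omega> f x" unfolding D_def bfg using elim by simp
    also have "\<dots> = 1/2 * \<Omega> g x - 1/2 * (u x + v x) * \<Omega> f x"
      by (simp add: uv)
    also have "\<dots> = r x"
      unfolding r_def q_def du_def dv_def by (simp add: algebra_simps)
    finally show ?case .
  qed
  from kaeeq[OF K s2[THEN conjunct1] Dm this] show ?thesis using Nr unfolding D_def by simp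
qed

theorem mainTheorem1:
  fixes M :: "'a measure" and X :: "('a \<Rightarrow> complex) set"
    and N :: "('a \<Rightarrow> complex) \<Rightarrow> real"
    and \<Omega> :: "('a \<Rightarrow> complex) \<Rightarrow> ('a \<Rightarrow> complex)"
  assumes "sigma_finite_measure M"
    and K: "koethe_space M X N"
    and "B_convex X N"
    and Q: "hom_quasi_linear M X N \<Omega>"
  shows "U_centralizer M X N \<Omega> \<longleftrightarrow> Linf_centralizer M X N \<Omega>"
proof
  assume "Linf_centralizer M X N \<Omega>"
  then obtain C where C: "\<forall>a\<in>Linf M. \<forall>f\<in>X.
        (\<lambda>x. \<Omega> (\<lambda>t. a t * f t) x - a x * \<Omega> f x) \<in> X \<and>
        N (\<lambda>x. \<Omega> (\<lambda>t. a t * f t) x - a x * \<Omega> f x) \<le> C * Linf_norm M a * N f"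
    unfolding Linf_centralizer_def by blast
  show "U_centralizer M X N \<Omega>" unfolding U_centralizer_def
  proof (intro exI[of _ "\<bar>C\<bar>"] ballI)
    fix a f assume a: "a \<in> units_group M" and f: "f \<in> X"
    have aL: "a \<in> Linf M" using a unfolding units_group_def Linf_def
      by (auto elim!: AE_mp intro!: exI[of _ 1])
    have am: "a \<in> borel_measurable M" using a by (simp add: units_group_def)
    note h = C[rule_format, OF aL f]
    have L0: "0 \<le> Linf_norm M a" using Linf_nonneg[OF am] .
    have L1: "Linf_norm M a \<le> 1" using Linf_unit_le[OF a] .
    have nf: "0 \<le> N f" using knn[OF K f] .
    have "C * Linf_norm M a \<le> \<bar>C\<bar>"
    proof -
      have "C * Linf_norm M a \<le> \<bar>C\<bar> * Linf_norm M a" using L0 by (intro mult_right_mono) auto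
      also have "\<dots> \<le> \<bar>C\<bar> * 1" using L1 by (intro mult_left_mono) auto
      finally show ?thesis by simp
    qed
    then have "C * Linf_norm M a * N f \<le> \<bar>C\<bar> * N f" using nf by (intro mult_right_mono) auto
    then show "(\<lambda>x. \<Omega> (\<lambda>t. a t * f t) x - a x * \<Omega> f x) \<in> X \<and>
        N (\<lambda>x. \<Omega> (\<lambda>t. a t * f t) x - a x * \<Omega> f x) \<le> \<bar>C\<bar> * N f"
      using h by linarith
  qed
next
  assume "U_centralizer M X N \<Omega>"
  then obtain C0 where C0: "\<forall>a\<in>units_group M. \<forall>f\<in>X.
        (\<lambda>x. \<Omega> (\<lambda>t. a t * f t) x - a x * \<Omega> f x) \<in> X \<and>
        N (\<lambda>x. \<Omega> (\<lambda>t. a t * f t) x - a x * \<Omega> f x) \<le> C0 * N f"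
    unfolding U_centralizer_def by blast
  obtain C1 where C1: "\<forall>f\<in>X. \<forall>g\<in>X.
        (\<lambda>x. \<Omega> (\<lambda>t. f t + g t) x - \<Omega> f x - \<Omega> g x) \<in> X \<and>
        N (\<lambda>x. \<Omega> (\<lambda>t. f t + g t) x - \<Omega> f x - \<Omega> g x) \<le> C1 * (N f + N g)"
    using Q unfolding hom_quasi_linear_def by blast
  have Qm: "\<And>g. g \<in> X \<Longrightarrow> \<Omega> g \<in> borel_measurable M"
    and Qae: "\<And>f g. f \<in> X \<Longrightarrow> g \<in> X \<Longrightarrow> (AE x in M. f x = g x) \<Longrightarrow> (AE x in M. \<Omega> f x = \<Omega> g x)"
    and Qh: "\<And>c f. f \<in> X \<Longrightarrow> AE x in M. \<Omega> (\<lambda>t. c * f t) x = c * \<Omega> f x"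
    using Q unfolding hom_quasi_linear_def by blast+
  define KK where "KK = \<bar>C0\<bar> + \<bar>C1\<bar>"
  show "Linf_centralizer M X N \<Omega>" unfolding Linf_centralizer_def
  proof (intro exI[of _ KK] ballI)
    fix a f assume aL: "a \<in> Linf M" and f: "f \<in> X"
    have am: "a \<in> borel_measurable M" using aL by (simp add: Linf_def)
    have fm: "f \<in> borel_measurable M" using kmeas[OF K f] .
    define L where "L = Linf_norm M a"
    have L0: "0 \<le> L" unfolding L_def using Linf_nonneg[OF am] .
    have aeL: "AE x in M. norm (a x) \<le> L" unfolding L_def using Linf_AE[OF aL] .
    have nf: "0 \<le> N f" using knn[OF K f] .
    define D where "D = (\<lambda>x. \<Omega> (\<lambda>t. a t * f t) x - a x * \<Omega> f x)"
    have afm: "(\<lambda>t. a t * f t) \<in> borel_measurable M" using am fm by measurable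
    show "D \<in> X \<and> N D \<le> KK * L * N f" unfolding D_def[symmetric] L_def[symmetric]
    proof (cases "L = 0")
      case True
      have z: "(\<lambda>t. 0 * f t) \<in> X" using kscal[OF K f] by blast
      have ae0: "AE x in M. a x = 0" using aeL by eventually_elim (simp add: True)
      have afX: "(\<lambda>t. a t * f t) \<in> X"
      proof -
        have "AE x in M. a x * f x = 0 * f x" using ae0 by eventually_elim simp
        then show ?thesis using kaeeq[OF K z afm] by blast
      qed
      have e1: "AE x in M. \<Omega> (\<lambda>t. a t * f t) x = \<Omega> (\<lambda>t. 0 * f t) x"
        by (rule Qae[OF afX z]) (use ae0 in \<open>auto elim!: AE_mp\<close>)
      have Dm: "D \<in> borel_measurable M" unfolding D_def using Qm[OF afX] Qm[OF f] am by measurable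
      have "AE x in M. D x = 0"
        using e1 Qh[OF f, of 0] ae0 by eventually_elim (simp add: D_def)
      from kaeeq[OF K kzero[OF K, THEN conjunct1] Dm this] kzero[OF K]
      show ?thesis using True by simp
    next
      case False
      then have Lp: "0 < L" using L0 by simp
      define b where "b x = (if norm (a x) \<le> L then a x / complex_of_real L else 0)" for x
      have bm: "b \<in> borel_measurable M" unfolding b_def[abs_def] using am by measurable
      have ble: "norm (b x) \<le> 1" for x
        using Lp by (auto simp: b_def norm_divide divide_le_eq)
      have abe: "AE x in M. a x = complex_of_real L * b x"
        using aeL by eventually_elim (use Lp in \<open>auto simp: b_def\<close>)
      note c = core[OF K Q C1 C0 bm ble f]
      have bfX: "(\<lambda>t. b t * f t) \<in> X"
        using ble by (intro kideal[OF K f, THEN conjunct1]) (use bm fm in measurable, auto simp: norm_mult mult_left_le_one_le)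
      have lbf: "(\<lambda>t. complex_of_real L * (b t * f t)) \<in> X" using kscal[OF K bfX] by blast
      have afX: "(\<lambda>t. a t * f t) \<in> X"
      proof -
        have "AE x in M. a x * f x = complex_of_real L * (b x * f x)" using abe by eventually_elim simp
        then show ?thesis using kaeeq[OF K lbf afm] by blast
      qed
      have e1: "AE x in M. \<Omega> (\<lambda>t. a t * f t) x = \<Omega> (\<lambda>t. complex_of_real L * (b t * f t)) x"
        by (rule Qae[OF afX lbf]) (use abe in \<open>auto elim!: AE_mp\<close>)
      define Db where "Db = (\<lambda>x. \<Omega> (\<lambda>t. b t * f t) x - b x * \<Omega> f x)"
      have Dm: "D \<in> borel_measurable M" unfolding D_def using Qm[OF afX] Qm[OF f] am by measurable
      have "AE x in M. D x = complex_of_real L * Db x"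
        using e1 Qh[OF bfX, of "complex_of_real L"] abe
        by eventually_elim (simp add: D_def Db_def algebra_simps)
      moreover have LD: "(\<lambda>x. complex_of_real L * Db x) \<in> X \<and> N (\<lambda>x. complex_of_real L * Db x) = L * N Db"
        using kscal[OF K c[folded Db_def, THEN conjunct1], of "complex_of_real L"] L0 by simp
      ultimately have "D \<in> X \<and> N D = L * N Db" using kaeeq[OF K _ Dm] by auto
      moreover have "L * N Db \<le> L * (KK * N f)" using c[folded Db_def] L0
        unfolding KK_def by (intro mult_left_mono) auto
      ultimately show ?thesis by (simp add: algebra_simps)
    qed
  qed
qed
end
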